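(* Let $d_1,\dots,d_n\ge1$, $\mu_i=x_i^{d_i}$, $I=\langle\mu_1,\dots,\mu_n\rangle\subseteq\mathbb K[x_1,\dots,x_n]$, and $k\ge1$ an integer. Then $I^k$ is good if and only if $I^k$ is very good.
   Context: Let $\mathbb K$ be a field, $R=\mathbb K[x_1,\dots,x_n]$, $\mathfrak m=\langle x_1,\dots,x_n\rangle$, $\mathbb N=\{0,1,2,\dots\}$. A monomial $x_1^{\alpha_1}\cdots x_n^{\alpha_n}$ is identified with the point $(\alpha_1,\dots,\alpha_n)\in\mathbb N^n$. For a monomial ideal $K$, $G(K)$ denotes its (unique) minimal monomial generating set. If $K$ is an $\mathfrak m$-primary monomial ideal, then for each $i$ there is a unique $e_i\ge1$ with $x_i^{e_i}\in G(K)$; write $\nu_i=x_i^{e_i}$ (for $K=I^k$ as in the claim, $e_i=kd_i$). For $(a_1,\dots,a_n)\in\mathbb N^n$ the box associated to $K$ is $B_{a_1,\dots,a_n}=([a_1e_1,(a_1+1)e_1]\times\cdots\times[a_ne_n,(a_n+1)e_n])\cap\mathbb N^n$; a monomial belongs to a box if its exponent vector does. $K$ is called good if for every integer $l\ge1$, every element of $G(K^l)$ belongs to some box $B_{a_1,\dots,a_n}$ with $a_1+\dots+a_n=l-1$. For a good ideal $K$ and $a\in\mathbb N^n$, with $l=a_1+\dots+a_n+1$, define $K_{a}=\left\langle \frac{m}{\nu_1^{a_1}\cdots\nu_n^{a_n}} : m\in B_{a}\cap G(K^l)\right\rangle$. A good ideal $K$ is called very good if $K_a=K$ for all $a\in\mathbb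 N^n$. *)

theory Defs
  imports Main
begin

text \<open>Monomials in K[x_i : i in 'n] are identified with exponent vectors 'n => nat.
A monomial ideal is identified with the (upward closed) set of exponent vectors
of the monomials it contains.\<close>

type_synonym 'n monomial = "'n \<Rightarrow> nat"
type_synonym 'n mideal = "'n monomial set"

definition mdvd :: "'n monomial \<Rightarrow> 'n monomial \<Rightarrow> bool" where
  "mdvd a b \<longleftrightarrow> (\<forall>i. a i \<le> b i)"

definition mgen :: "'n monomial set \<Rightarrow> 'n mideal" where
  "mgen S = {b. \<exists>a\<in>S. mdvd a b}"

definition mingens :: "'n mideal \<Rightarrow> 'n monomial set" where
  "mingens K = {a \<in> K. \<forall>b\<in>K. mdvd b a \<longrightarrow> b = a}"

definition mmult :: "'n mideal \<Rightarrow> 'n mideal \<Rightarrow> 'n mideal" where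
  "mmult K L = mgen {(\<lambda>i. a i + b i) | a b. a \<in> K \<and> b \<in> L}"

fun mpow :: "'n mideal \<Rightarrow> nat \<Rightarrow> 'n mideal" where
  "mpow K 0 = UNIV"
| "mpow K (Suc l) = mmult K (mpow K l)"

definition pp :: "'n \<Rightarrow> nat \<Rightarrow> 'n monomial" where
  "pp i e = (\<lambda>j. if j = i then e else 0)"

definition m_primary :: "('n::finite) mideal \<Rightarrow> bool" where
  "m_primary K \<longleftrightarrow> (\<forall>a\<in>K. \<forall>b. mdvd a b \<longrightarrow> b \<in> K) \<and> (\<lambda>_. 0) \<notin> K
     \<and> (\<forall>i. \<exists>e. pp i e \<in> K)"

definition pexp :: "'n mideal \<Rightarrow> 'n \<Rightarrow> nat" where
  "pexp K i = (LEAST e. pp i e \<in> K)"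

definition box :: "'n mideal \<Rightarrow> 'n monomial \<Rightarrow> 'n monomial set" where
  "box K a = {m. \<forall>i. a i * pexp K i \<le> m i \<and> m i \<le> (a i + 1) * pexp K i}"

definition good :: "('n::finite) mideal \<Rightarrow> bool" where
  "good K \<longleftrightarrow> m_primary K \<and>
     (\<forall>l\<ge>1. \<forall>m\<in>mingens (mpow K l). \<exists>a. (\<Sum>i\<in>UNIV. a i) = l - 1 \<and> m \<in> box K a)"

text \<open>K_a; division by nu_1^{a_1}...nu_n^{a_n} is exponent subtraction.\<close>
definition Ka :: "('n::finite) mideal \<Rightarrow> 'n monomial \<Rightarrow> 'n mideal" where
  "Ka K a = mgen {(\<lambda>i. m i - a i * pexp K i) | m.
      m \<in> box K a \<inter> mingens (mpow K ((\<Sum>i\<in>UNIV. a i) + 1))}"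

definition very_good :: "('n::finite) mideal \<Rightarrow> bool" where
  "very_good K \<longleftrightarrow> good K \<and> (\<forall>a. Ka K a = K)"

end

theory Submission
  imports Defs
begin

definition gset :: "('n::finite \<Rightarrow> nat) \<Rightarrow> nat \<Rightarrow> 'n monomial set" where
  "gset d m = {(\<lambda>i. d i * c i) | c. sum c UNIV = m}"

lemma mdvd_refl[simp]: "mdvd a a" by (simp add: mdvd_def)

lemma mdvd_trans: "mdvd a b \<Longrightarrow> mdvd b c \<Longrightarrow> mdvd a c"
  unfolding mdvd_def using order_trans by blast

lemma mgen_eqI:
  assumes "\<And>a. a \<in> A \<Longrightarrow> \<exists>b\<in>B. mdvd b a" "\<And>b. b \<in> B \<Longrightarrow> \<exists>a\<in>A. mdvd a b"
  shows "mgen A = mgen B"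
  unfolding mgen_def using assms mdvd_trans by blast

lemma mmult_mgen:
  "mmult (mgen A) (mgen B) = mgen {(\<lambda>i. a i + b i) | a b. a \<in> A \<and> b \<in> B}"
  unfolding mmult_def
proof (rule mgen_eqI)
  fix x assume "x \<in> {(\<lambda>i. a i + b i) | a b. a \<in> mgen A \<and> b \<in> mgen B}"
  then obtain a b a' b' where "x = (\<lambda>i. a i + b i)" "a' \<in> A" "b' \<in> B" "mdvd a' a" "mdvd b' b"
    unfolding mgen_def by blast
  then show "\<exists>y\<in>{(\<lambda>i. a i + b i) | a b. a \<in> A \<and> b \<in> B}. mdvd y x"
    by (auto simp: mdvd_def intro!: add_mono)
next
  fix x assume "x \<in> {(\<lambda>i. a i + b i) | a b. a \<in> A \<and> b \<in> B}"
  then have "x \<in> {(\<lambda>i. a i + b i) | a b. a \<in> mgen A \<and> b \<in> mgen B}"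
    unfolding mgen_def by force
  then show "\<exists>y\<in>{(\<lambda>i. a i + b i) | a b. a \<in> mgen A \<and> b \<in> mgen B}. mdvd y x" by force
qed

lemma decomp:
  fixes c :: "'n::finite \<Rightarrow> nat"
  shows "a \<le> sum c UNIV \<Longrightarrow> \<exists>c1. (\<forall>i. c1 i \<le> c i) \<and> sum c1 UNIV = a"
proof (induction a)
  case 0
  then show ?case by (intro exI[of _ "\<lambda>_. 0"]) simp
next
  case (Suc a)
  then obtain c1 where c1: "\<forall>i. c1 i \<le> c i" "sum c1 UNIV = a" by auto
  have "\<exists>i. c1 i < c i"
  proof (rule ccontr)
    assume "\<not> ?thesis"
    then have "c1 = c" using c1 by (simp add: fun_eq_iff le_antisym not_less)
    then show False using Suc.prems c1 by simp
  qed
  then obtain i where i: "c1 i < c i" by auto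
  define c2 where "c2 = c1(i := Suc (c1 i))"
  have "sum c2 UNIV = c2 i + sum c2 (UNIV - {i})" by (simp add: sum.remove)
  also have "sum c2 (UNIV - {i}) = sum c1 (UNIV - {i})" unfolding c2_def by (rule sum.cong) auto
  also have "c2 i = Suc (c1 i)" unfolding c2_def by simp
  also have "Suc (c1 i) + sum c1 (UNIV - {i}) = Suc (sum c1 UNIV)" by (simp add: sum.remove)
  finally have "sum c2 UNIV = Suc a" using c1 by simp
  moreover have "\<forall>j. c2 j \<le> c j" using c1 i unfolding c2_def by auto
  ultimately show ?case by blast
qed

lemma gset_add:
  "{(\<lambda>i. a i + b i) | a b. a \<in> gset d p \<and> b \<in> gset d q} = gset d (p + q)"
proof (intro equalityI subsetI)
  fix x assume "x \<in> {(\<lambda>i. a i + b i) | a b. a \<in> gset d p \<and> b \<in> gset d q}"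
  then obtain c c' where "x = (\<lambda>i. d i * c i + d i * c' i)" "sum c UNIV = p" "sum c' UNIV = q"
    unfolding gset_def by blast
  then show "x \<in> gset d (p + q)" unfolding gset_def
    by (intro CollectI exI[of _ "\<lambda>i. c i + c' i"]) (simp add: sum.distrib algebra_simps)
next
  fix x assume "x \<in> gset d (p + q)"
  then obtain c where c: "x = (\<lambda>i. d i * c i)" "sum c UNIV = p + q" unfolding gset_def by blast
  obtain c1 where c1: "\<forall>i. c1 i \<le> c i" "sum c1 UNIV = p" using decomp[of p c] c by auto
  have "sum (\<lambda>i. c i - c1 i) UNIV = q"
    using c c1 by (simp add: sum_subtractf_nat)
  moreover have "x = (\<lambda>i. d i * c1 i + d i * (c i - c1 i))"
    using c c1 by (auto simp: fun_eq_iff simp flip: add_mult_distrib2)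
  moreover have "(\<lambda>i. d i * c1 i) \<in> gset d p" unfolding gset_def using c1 by blast
  moreover have "(\<lambda>i. d i * (c i - c1 i)) \<in> gset d q" unfolding gset_def
    using \<open>sum (\<lambda>i. c i - c1 i) UNIV = q\<close> by (intro CollectI exI[of _ "\<lambda>i. c i - c1 i"]) simp
  ultimately show "x \<in> {(\<lambda>i. a i + b i) | a b. a \<in> gset d p \<and> b \<in> gset d q}"
    by (intro CollectI exI[of _ "\<lambda>i. d i * c1 i"] exI[of _ "\<lambda>i. d i * (c i - c1 i)"]) auto
qed

lemma mmult_gset: "mmult (mgen (gset d p)) (mgen (gset d q)) = mgen (gset d (p + q))"
  by (simp add: mmult_mgen gset_add)

lemma sum_pp: "sum (pp (i::'n::finite) e) UNIV = e"
  unfolding pp_def by (subst sum.remove[of UNIV i]) auto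

lemma gen_one: "mgen {pp i (d i) | i. True} = mgen (gset d 1)"
proof (rule mgen_eqI)
  fix a assume "a \<in> {pp i (d i) | i. True}"
  then obtain i where "a = pp i (d i)" by auto
  moreover have "pp i (d i) = (\<lambda>j. d j * pp i 1 j)" by (auto simp: pp_def fun_eq_iff)
  ultimately have "a \<in> gset d 1" unfolding gset_def using sum_pp[of i 1] by blast
  then show "\<exists>b\<in>gset d 1. mdvd b a" by (intro bexI[of _ a]) auto
next
  fix b assume "b \<in> gset d 1"
  then obtain c where c: "b = (\<lambda>i. d i * c i)" "sum c UNIV = 1" unfolding gset_def by blast
  have "\<exists>i. c i \<ge> 1"
  proof (rule ccontr)
    assume "\<not> ?thesis" then have "c = (\<lambda>_. 0)" by (intro ext) (metis less_one not_le)
    then show False using c by simp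
  qed
  then obtain i where "c i \<ge> 1" by auto
  then have "mdvd (pp i (d i)) b" using c by (auto simp: mdvd_def pp_def)
  then show "\<exists>a\<in>{pp i (d i) | i. True}. mdvd a b" by blast
qed

lemma gset0: "mgen (gset d 0) = UNIV"
proof -
  have "(\<lambda>_. 0) \<in> gset d 0" unfolding gset_def by (intro CollectI exI[of _ "\<lambda>_. 0"]) auto
  then show ?thesis unfolding mgen_def mdvd_def by force
qed

lemma mpow_I: "mpow (mgen {pp i (d i) | i. True}) m = mgen (gset d m)"
proof (induction m)
  case 0 then show ?case by (simp add: gset0)
next
  case (Suc m)
  have "mpow (mgen {pp i (d i) | i. True}) (Suc m) = mmult (mgen {pp i (d i) | i. True}) (mpow (mgen {pp i (d i) | i. True}) m)"
    by (simp only: mpow.simps)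
  also have "\<dots> = mmult (mgen (gset d 1)) (mgen (gset d m))" by (subst Suc) (simp only: gen_one)
  also have "\<dots> = mgen (gset d (Suc m))" by (simp add: mmult_gset)
  finally show ?case .
qed

lemma mpow_K: "mpow (mgen (gset d k)) l = mgen (gset d (k * l))"
  by (induction l) (simp_all add: gset0 mmult_gset)

lemma le_sum_fin: "(c::'n::finite \<Rightarrow> nat) i \<le> sum c UNIV"
  by (rule member_le_sum) auto

lemma pexp_gset:
  assumes d: "\<forall>i. d i \<ge> 1"
  shows "pexp (mgen (gset d k)) i = k * d i"
proof -
  have mem: "pp i e \<in> mgen (gset d k) \<longleftrightarrow> k * d i \<le> e" for e
  proof
    assume "pp i e \<in> mgen (gset d k)"
    then obtain c where c: "sum c UNIV = k" "mdvd (\<lambda>j. d j * c j) (pp i e)"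
      unfolding mgen_def gset_def by blast
    have z: "c j = 0" if "j \<noteq> i" for j
    proof -
      have "d j * c j \<le> 0" using c(2) that by (auto simp: mdvd_def pp_def dest: spec[of _ j])
      then show ?thesis using d by (metis mult_is_0 le_zero_eq not_one_le_zero)
    qed
    have "sum c UNIV = c i + sum c (UNIV - {i})" by (simp add: sum.remove)
    also have "sum c (UNIV - {i}) = 0" using z by simp
    finally have "c i = k" using c by simp
    from c(2) have "d i * c i \<le> pp i e i" unfolding mdvd_def by blast
    then show "k * d i \<le> e" using \<open>c i = k\<close> by (simp add: pp_def mult.commute)
  next
    assume "k * d i \<le> e"
    moreover have "(\<lambda>j. d j * pp i k j) \<in> gset d k" unfolding gset_def using sum_pp[of i k] by blast
    ultimately show "pp i e \<in> mgen (gset d k)"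
      unfolding mgen_def by (intro CollectI bexI[of _ "(\<lambda>j. d j * pp i k j)"]) (auto simp: mdvd_def pp_def mult.commute)
  qed
  show ?thesis unfolding pexp_def mem
    by (rule Least_equality) auto
qed

lemma mingens_gset:
  assumes d: "\<forall>i. d i \<ge> 1"
  shows "mingens (mgen (gset d m)) = gset d m"
proof (intro equalityI subsetI)
  fix x assume x: "x \<in> mingens (mgen (gset d m))"
  then obtain y where y: "y \<in> gset d m" "mdvd y x" unfolding mingens_def mgen_def by blast
  then have "y \<in> mgen (gset d m)" unfolding mgen_def using mdvd_refl by blast
  then have "y = x" using x y unfolding mingens_def by blast
  then show "x \<in> gset d m" using y by simp
next
  fix x assume x: "x \<in> gset d m"
  then obtain c where c: "x = (\<lambda>i. d i * c i)" "sum c UNIV = m" unfolding gset_def by blast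
  have "x \<in> mgen (gset d m)" using x mdvd_refl unfolding mgen_def by blast
  moreover have "b = x" if b: "b \<in> mgen (gset d m)" "mdvd b x" for b
  proof -
    obtain c' where c': "sum c' UNIV = m" "mdvd (\<lambda>i. d i * c' i) b"
      using b unfolding mgen_def gset_def by blast
    have le: "c' i \<le> c i" for i
    proof -
      have "d i * c' i \<le> d i * c i" using c' b c unfolding mdvd_def by (meson order_trans)
      then show ?thesis using d[rule_format, of i] by auto
    qed
    have "c' = c"
    proof (rule ccontr)
      assume "c' \<noteq> c"
      then obtain i where "c' i < c i" using le by (metis fun_eq_iff le_neq_implies_less)
      then have "sum c' UNIV < sum c UNIV"
        using le by (intro sum_strict_mono_ex1) auto
      then show False using c c' by simp
    qed
    then show "b = x" using c' b c unfolding mdvd_def by (auto simp: fun_eq_iff intro: le_antisym)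
  qed
  ultimately show "x \<in> mingens (mgen (gset d m))" unfolding mingens_def by blast
qed

lemma Ka_eq:
  assumes d: "\<forall>i. d i \<ge> 1"
  shows "Ka (mgen (gset d k)) a = mgen (gset d k)"
proof -
  let ?K = "mgen (gset d k)"
  have pe: "pexp ?K i = k * d i" for i using pexp_gset[OF d] .
  have pef: "pexp ?K = (\<lambda>i. k * d i)" using pe by (simp add: fun_eq_iff)
  have mg: "mingens (mpow ?K (sum a UNIV + 1)) = gset d (k * (sum a UNIV + 1))"
    by (simp only: mpow_K) (simp add: mingens_gset[OF d])
  show ?thesis unfolding Ka_def mg
  proof (rule mgen_eqI)
    fix y assume "y \<in> {(\<lambda>i. m i - a i * pexp ?K i) | m. m \<in> box ?K a \<inter> gset d (k * (sum a UNIV + 1))}"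
    then obtain c where c: "y = (\<lambda>i. d i * c i - a i * (k * d i))" "sum c UNIV = k * (sum a UNIV + 1)"
      "\<forall>i. a i * (k * d i) \<le> d i * c i"
      unfolding box_def unfolding pef unfolding gset_def by blast
    have ge: "k * a i \<le> c i" for i
    proof -
      have "d i * (k * a i) \<le> d i * c i" using c(3) by (metis mult.commute mult.left_commute)
      then show ?thesis using d[rule_format, of i] by auto
    qed
    have "y = (\<lambda>i. d i * (c i - k * a i))" using c(1)
      by (simp add: fun_eq_iff diff_mult_distrib2 algebra_simps)
    moreover have "sum (\<lambda>i. c i - k * a i) UNIV = k"
      using c(2) ge by (simp add: sum_subtractf_nat sum_distrib_left algebra_simps)
    ultimately have "y \<in> gset d k" unfolding gset_def by (intro CollectI exI[of _ "\<lambda>i. c i - k * a i"]) simp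
    then show "\<exists>b\<in>gset d k. mdvd b y" using mdvd_refl by blast
  next
    fix y assume "y \<in> gset d k"
    then obtain c where c: "y = (\<lambda>i. d i * c i)" "sum c UNIV = k" unfolding gset_def by blast
    define m where "m = (\<lambda>i. d i * (c i + k * a i))"
    have "m \<in> gset d (k * (sum a UNIV + 1))" unfolding m_def gset_def
      using c(2) by (intro CollectI exI[of _ "\<lambda>i. c i + k * a i"])
        (simp add: sum.distrib sum_distrib_left algebra_simps)
    moreover have "m \<in> box ?K a" unfolding box_def pe m_def
    proof (intro CollectI allI conjI)
      fix i
      show "a i * (k * d i) \<le> d i * (c i + k * a i)" by (simp add: algebra_simps)
      have "c i \<le> k" using le_sum_fin[of c i] c by simp
      then show "d i * (c i + k * a i) \<le> (a i + 1) * (k * d i)" by (simp add: algebra_simps)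
    qed
    moreover have "y = (\<lambda>i. m i - a i * pexp ?K i)" unfolding pe m_def c(1)
      by (simp add: fun_eq_iff algebra_simps)
    ultimately show "\<exists>x\<in>{(\<lambda>i. m i - a i * pexp ?K i) | m. m \<in> box ?K a \<inter> gset d (k * (sum a UNIV + 1))}. mdvd x y"
      by auto
  qed
qed

theorem mainTheorem19:
  fixes d :: "'n::finite \<Rightarrow> nat" and k :: nat
  assumes "\<forall>i. d i \<ge> 1" and "k \<ge> 1"
  shows "good (mpow (mgen {pp i (d i) | i. True}) k)
     \<longleftrightarrow> very_good (mpow (mgen {pp i (d i) | i. True}) k)"
  unfolding very_good_def mpow_I using Ka_eq[OF assms(1)] by simp

end
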